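(* For all $p\in\mathbb N=\{0,1,2,\dots\}$, $\zeta\in\{0,1\}$ and $0\le k\le n$, $$E_{n,k}(-1,2;\,2-\zeta+2p,\ \zeta-2p)=n!\binom{n+1}{2k+2p+1-\zeta}-(-1)^{k+p}\sum_{\ell=0}^{p-1}(-1)^\ell(2-\zeta+2\ell)^{\overline n}\binom{n+1}{k+p-\ell}.$$
   Context: Generalized Eulerian numbers $E_{n,k}(a,b;c_0,c_\infty)$: defined by $E_{0,0}=1$, $E_{n,k}=0$ if $n<0$, $k<0$ or $k>n$, and $E_{n+1,k+1}=[-an+b(k+1)+c_0]E_{n,k+1}+[(a+b)n-bk+c_\infty]E_{n,k}$ for $n\ge0$, $k\in\mathbb Z$. $x^{\overline n}=x(x+1)\cdots(x+n-1)$; $\binom{m}{j}=0$ if $j<0$ or $j>m$. *)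

theory Defs
  imports Complex_Main
begin

text \<open>Generalized Eulerian numbers E_{n,k}(a,b;c0,cinf), with k ranging over the integers;
  E_{n,k} = 0 for k < 0 or k > n.  The recurrence
  E_{n+1,k+1} = [-a n + b(k+1) + c0] E_{n,k+1} + [(a+b) n - b k + cinf] E_{n,k}
  is written with k' = k+1.\<close>
fun genEuler :: "int \<Rightarrow> int \<Rightarrow> int \<Rightarrow> int \<Rightarrow> nat \<Rightarrow> int \<Rightarrow> int" where
  "genEuler a b c0 ci 0 k = (if k = 0 then 1 else 0)"
| "genEuler a b c0 ci (Suc n) k =
     (if k < 0 \<or> k > int (Suc n) then 0
      else (- a * int n + b * k + c0) * genEuler a b c0 ci n k
         + ((a + b) * int n - b * (k - 1) + ci) * genEuler a b c0 ci n (k - 1))"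

definition binomz :: "nat \<Rightarrow> int \<Rightarrow> int" where
  "binomz m j = (if j < 0 then 0 else int (m choose nat j))"

end

theory Submission imports Defs begin


lemma K_nat: "Suc t * (N choose Suc t) = (N - t) * (N choose t)"
  using binomial_absorption[of t N] binomial_absorb_comp[of N t] by simp

lemma K_int: "(int t + 1) * int (N choose Suc t) = (int N - int t) * int (N choose t)"
proof (cases "t \<le> N")
  case True
  have "int (Suc t * (N choose Suc t)) = int ((N - t) * (N choose t))" using K_nat by metis
  then show ?thesis using True by (simp add: of_nat_diff algebra_simps)
next
  case False
  then show ?thesis by (simp add: binomial_eq_0)
qed

lemma binomz_neg: "j < 0 \<Longrightarrow> binomz m j = 0" by (simp add: binomz_def)
lemma binomz_nat: "binomz m (int t) = int (m choose t)" by (simp add: binomz_def)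

lemma I1:
  fixes j :: int
  shows "(int n + 1) * binomz (n+2) j = (int n + j + 1) * binomz (n+1) j + (int n + 3 - j) * binomz (n+1) (j-2)"
proof -
  consider "j < 0" | "j = 0" | "j = 1" | t where "j = int t + 2"
  proof -
    assume h: "j < 0 \<Longrightarrow> thesis" "j = 0 \<Longrightarrow> thesis" "j = 1 \<Longrightarrow> thesis" "\<And>t. j = int t + 2 \<Longrightarrow> thesis"
    show thesis
    proof (cases "j \<ge> 2")
      case True
      then have "j = int (nat (j - 2)) + 2" by simp
      then show ?thesis by (rule h(4))
    next
      case False
      then have "j < 0 \<or> j = 0 \<or> j = 1" by linarith
      then show ?thesis using h(1-3) by blast
    qed
  qed
  then show ?thesis
  proof cases
    case 1 then show ?thesis by (simp add: binomz_def)
  next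
    case 2 then show ?thesis by (simp add: binomz_def)
  next
    case 3 then show ?thesis by (simp add: binomz_def)
  next
    case 4
    have e1: "j - 2 = int t" using 4 by simp
    have e2: "j = int (Suc (Suc t))" using 4 by simp
    have p: "int (Suc (Suc n) choose Suc (Suc t)) = int (Suc n choose Suc t) + int (Suc n choose Suc (Suc t))"
      by simp
    have k1: "(int (Suc t) + 1) * int (Suc n choose Suc (Suc t)) = (int (Suc n) - int (Suc t)) * int (Suc n choose Suc t)"
      using K_int[of "Suc t" "Suc n"] by simp
    have k2: "(int t + 1) * int (Suc n choose Suc t) = (int (Suc n) - int t) * int (Suc n choose t)"
      using K_int[of t "Suc n"] by simp
    show ?thesis unfolding e1 unfolding e2 binomz_nat
      using p k1 k2 by (simp add: algebra_simps)
  qed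
qed

lemma I2:
  fixes i c :: int
  shows "(c + int n) * binomz (n+2) i = (int n + 2*i + c) * binomz (n+1) i - (int n - 2*i + 4 - c) * binomz (n+1) (i-1)"
proof -
  consider "i < 0" | "i = 0" | t where "i = int t + 1"
  proof -
    assume h: "i < 0 \<Longrightarrow> thesis" "i = 0 \<Longrightarrow> thesis" "\<And>t. i = int t + 1 \<Longrightarrow> thesis"
    show thesis
    proof (cases "i \<ge> 1")
      case True
      then have "i = int (nat (i - 1)) + 1" by simp
      then show ?thesis by (rule h(3))
    next
      case False
      then have "i < 0 \<or> i = 0" by linarith
      then show ?thesis using h(1-2) by blast
    qed
  qed
  then show ?thesis
  proof cases
    case 1 then show ?thesis by (simp add: binomz_def)
  next
    case 2 then show ?thesis by (simp add: binomz_def)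
  next
    case 3
    have e1: "i - 1 = int t" using 3 by simp
    have e2: "i = int (Suc t)" using 3 by simp
    have p: "int (Suc (Suc n) choose Suc t) = int (Suc n choose t) + int (Suc n choose Suc t)"
      by simp
    have k2: "(int t + 1) * int (Suc n choose Suc t) = (int (Suc n) - int t) * int (Suc n choose t)"
      using K_int[of t "Suc n"] by simp
    show ?thesis unfolding e1 unfolding e2 binomz_nat
      using p k2 by (simp add: algebra_simps)
  qed
qed

definition sg :: "int \<Rightarrow> int" where "sg k = (if even k then 1 else -1)"

lemma sg_m1: "sg (k - 1) = - sg k" by (simp add: sg_def)
lemma sg_p1: "sg (k + 1) = - sg k" by (simp add: sg_def)
lemma sg_2: "sg (k + 2 * x) = sg k" by (simp add: sg_def)
lemma sg_nat: "sg (int m) = (-1) ^ m" by (simp add: sg_def)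

definition Rf :: "int \<Rightarrow> nat \<Rightarrow> nat \<Rightarrow> int \<Rightarrow> int" where
  "Rf z p n k = fact n * binomz (n+1) (2*k + 2*int p + 1 - z)
     - (\<Sum>l<p. sg (k + int p + int l) * pochhammer (2 - z + 2 * int l) n * binomz (n+1) (k + int p - int l))"

lemma lemA:
  fixes m k :: int
  shows "fact (n+1) * binomz (n+2) (2*k+m) = (int n + 2*k + m + 1) * (fact n * binomz (n+1) (2*k+m))
     + (int n - 2*(k-1) + 1 - m) * (fact n * binomz (n+1) (2*(k-1)+m))"
proof -
  have f: "(fact (n+1) :: int) = (int n + 1) * fact n" by (simp add: algebra_simps)
  have e: "2*(k-1)+m = (2*k+m) - 2" by simp
  have "fact (n+1) * binomz (n+2) (2*k+m) = fact n * ((int n + 1) * binomz (n+2) (2*k+m))"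
    unfolding f by (simp add: algebra_simps)
  also have "\<dots> = fact n * ((int n + (2*k+m) + 1) * binomz (n+1) (2*k+m) + (int n + 3 - (2*k+m)) * binomz (n+1) ((2*k+m)-2))"
    by (subst I1) simp
  finally show ?thesis unfolding e by (simp add: algebra_simps)
qed

lemma lemB:
  fixes c s d k :: int
  shows "sg (k+d) * pochhammer c (n+1) * binomz (n+2) (k+s) =
     (int n + 2*k + (c+2*s)) * (sg (k+d) * pochhammer c n * binomz (n+1) (k+s))
   + (int n - 2*(k-1) + (2-c-2*s)) * (sg (k-1+d) * pochhammer c n * binomz (n+1) (k-1+s))"
proof -
  have pr: "pochhammer c (n+1) = (c + int n) * pochhammer c n"
    using pochhammer_rec'[of c n] by simp
  have sgm: "sg (k-1+d) = - sg (k+d)" using sg_m1[of "k+d"] by (simp add: algebra_simps)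
  have e: "k-1+s = (k+s) - 1" by simp
  have "sg (k+d) * pochhammer c (n+1) * binomz (n+2) (k+s) = sg (k+d) * pochhammer c n * ((c + int n) * binomz (n+2) (k+s))"
    unfolding pr by (simp add: algebra_simps)
  also have "\<dots> = sg (k+d) * pochhammer c n * ((int n + 2*(k+s) + c) * binomz (n+1) (k+s) - (int n - 2*(k+s) + 4 - c) * binomz (n+1) ((k+s)-1))"
    by (subst I2) simp
  finally show ?thesis unfolding sgm e by (simp add: algebra_simps)
qed

lemma Rf_rec:
  "Rf z p (n+1) k = (int n + 2*k + (2 - z + 2*int p)) * Rf z p n k
     + (int n - 2*(k-1) + (z - 2*int p)) * Rf z p n (k-1)"
proof -
  define c0 where "c0 = int n + 2*k + (2 - z + 2*int p)"
  define c1 where "c1 = int n - 2*(k-1) + (z - 2*int p)"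
  let ?X = "\<lambda>n k l. sg (k + int p + int l) * pochhammer (2 - z + 2 * int l) n * binomz (n+1) (k + int p - int l)"
  have A: "fact (n+1) * binomz (n+1+1) (2*k + 2*int p + 1 - z)
      = c0 * (fact n * binomz (n+1) (2*k + 2*int p + 1 - z)) + c1 * (fact n * binomz (n+1) (2*(k-1) + 2*int p + 1 - z))"
    using lemA[of n k "2*int p + 1 - z"] unfolding c0_def c1_def
    by (simp add: algebra_simps)
  have B: "?X (n+1) k l = c0 * ?X n k l + c1 * ?X n (k-1) l" for l
  proof -
    have "?X (n+1) k l = sg (k + (int p + int l)) * pochhammer (2 - z + 2 * int l) (n+1) * binomz (n+2) (k + (int p - int l))"
      by (simp add: algebra_simps)
    also have "\<dots> = c0 * ?X n k l + c1 * ?X n (k-1) l"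
      apply (subst lemB)
      unfolding c0_def c1_def by (simp add: algebra_simps)
    finally show ?thesis .
  qed
  have "Rf z p (n+1) k = c0 * (fact n * binomz (n+1) (2*k + 2*int p + 1 - z)) + c1 * (fact n * binomz (n+1) (2*(k-1) + 2*int p + 1 - z))
       - (c0 * (\<Sum>l<p. ?X n k l) + c1 * (\<Sum>l<p. ?X n (k-1) l))"
    unfolding Rf_def A[symmetric] B by (simp add: sum.distrib sum_distrib_left)
  also have "\<dots> = c0 * Rf z p n k + c1 * Rf z p n (k-1)"
    unfolding Rf_def by (simp add: algebra_simps)
  finally show ?thesis unfolding c0_def c1_def .
qed

lemma binomz1: "binomz 1 j = (if j = 0 \<or> j = 1 then 1 else 0)"
proof (cases "j < 0")
  case True then show ?thesis by (simp add: binomz_def)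
next
  case False
  then have "j = int (nat j)" by simp
  then show ?thesis unfolding binomz_def using False
    by (cases "nat j") (auto simp: binomial_eq_0)
qed

lemma binomz1': "binomz (Suc 0) j = (if j = 0 \<or> j = 1 then 1 else 0)"
  using binomz1 by simp

lemma Rf_base:
  assumes "z \<in> {0,1}"
  shows "Rf z p 0 k = (if k = 0 then 1 else 0)"
  using assms
proof (induction p arbitrary: k)
  case 0
  then show ?case by (auto simp: Rf_def binomz1')
next
  case (Suc p)
  have "Rf z (Suc p) 0 k = Rf z p 0 (k+1) + sg k * binomz 1 (k+1)"
  proof -
    have s: "(\<Sum>l<Suc p. sg (k + int (Suc p) + int l) * pochhammer (2 - z + 2 * int l) 0 * binomz (0+1) (k + int (Suc p) - int l))
      = (\<Sum>l<p. sg ((k+1) + int p + int l) * pochhammer (2 - z + 2 * int l) 0 * binomz (0+1) ((k+1) + int p - int l))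
        + sg (k + 1 + 2 * int p) * binomz 1 (k+1)"
      by (simp add: algebra_simps)
    show ?thesis unfolding Rf_def s sg_p1 sg_2
      by (simp add: algebra_simps)
  qed
  also have "\<dots> = (if k = 0 then 1 else 0)"
    using Suc.IH[of "k+1"] Suc.prems unfolding binomz1 by (cases "k = -1") (auto simp: sg_def)
  finally show ?case .
qed

lemma genEuler_zero: "k < 0 \<or> k > int n \<Longrightarrow> genEuler a b c0 ci n k = 0"
  by (cases n) auto

lemma genEuler_Suc: "genEuler a b c0 ci (Suc n) k =
   (- a * int n + b * k + c0) * genEuler a b c0 ci n k
         + ((a + b) * int n - b * (k - 1) + ci) * genEuler a b c0 ci n (k - 1)"
  by (auto simp: genEuler_zero)

lemma main_eq:
  assumes "z \<in> {0,1}"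
  shows "genEuler (-1) 2 (2 - z + 2 * int p) (z - 2 * int p) n k = Rf z p n k"
proof (induction n arbitrary: k)
  case 0
  then show ?case using Rf_base[OF assms] by simp
next
  case (Suc n)
  show ?case unfolding genEuler_Suc Suc.IH using Rf_rec[of z p n k]
    by (simp add: algebra_simps)
qed

theorem mainTheorem17:
  fixes p n k :: nat and \<zeta> :: int
  assumes "\<zeta> \<in> {0, 1}" and "k \<le> n"
  shows "genEuler (-1) 2 (2 - \<zeta> + 2 * int p) (\<zeta> - 2 * int p) n (int k) =
    fact n * binomz (n + 1) (2 * int k + 2 * int p + 1 - \<zeta>)
    - (-1) ^ (k + p) * (\<Sum>l<p. (-1) ^ l * pochhammer (2 - \<zeta> + 2 * int l) n
                                   * binomz (n + 1) (int k + int p - int l))"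
proof -
  have "sg (int k + int p + int l) = (-1)^(k+p) * (-1)^l" for l
    using sg_nat[of "k+p+l"] by (simp add: power_add)
  then show ?thesis unfolding main_eq[OF assms(1)] Rf_def
    by (simp add: sum_distrib_left algebra_simps)
qed

end
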